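(* Let $\theta\in\Theta=\{i\pi/4\}_{0\le i\le 7}$, let $d,r\in\{0,1\}$ and set $\delta=\theta+r\pi$. Let $\rho_{\mathrm{dummy}}$ and $\rho_{\mathrm{trap}}$ be single-qubit density matrices with $F_{\mathrm{dummy}}=\langle d|\rho_{\mathrm{dummy}}|d\rangle$ and $F_{\mathrm{trap}}=\langle +_\theta|\rho_{\mathrm{trap}}|+_\theta\rangle$. Apply a controlled-$Z$ gate to the two-qubit state $\rho_{\mathrm{dummy}}\otimes\rho_{\mathrm{trap}}$ and then measure the trap (second) qubit in the basis $\{|+_\delta\rangle,|-_\delta\rangle\}$, where outcome $0$ corresponds to $|+_\delta\rangle$ and outcome $1$ to $|-_\delta\rangle$. Then the probability that the outcome differs from $d\oplus r$ is $$p_{\mathrm{fail}}=F_{\mathrm{dummy}}(1-F_{\mathrm{trap}})+F_{\mathrm{trap}}(1-F_{\mathrm{dummy}}).$$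
   Context: For $\theta\in\mathbb{R}$, $|\pm_\theta\rangle=\frac{1}{\sqrt2}(|0\rangle\pm e^{i\theta}|1\rangle)$. This models a test round of two-qubit verified blind quantum computation: the "dummy" qubit is intended to be $|d\rangle$ and the "trap" qubit is intended to be $|+_\theta\rangle$; the test round fails when the trap measurement outcome is not $d\oplus r$. *)

theory Defs
  imports Complex_Main
begin

text \<open>Single-qubit operators are 2x2 complex matrices, represented as functions
  nat \<Rightarrow> nat \<Rightarrow> complex on the computational-basis indices 0, 1.
  Two-qubit operators are indexed by pairs (a, b), a = first (dummy) qubit,
  b = second (trap) qubit.\<close>

type_synonym qmat = "nat \<Rightarrow> nat \<Rightarrow> complex"
type_synonym qmat2 = "nat \<times> nat \<Rightarrow> nat \<times> nat \<Rightarrow> complex"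
type_synonym ket = "nat \<Rightarrow> complex"

definition basis_ket :: "nat \<Rightarrow> ket" where
  "basis_ket d = (\<lambda>k. if k = d then 1 else 0)"

definition ket_plus :: "real \<Rightarrow> ket" where
  "ket_plus \<theta> = (\<lambda>k. if k = 0 then 1 / complex_of_real (sqrt 2)
                      else exp (\<i> * complex_of_real \<theta>) / complex_of_real (sqrt 2))"

definition ket_minus :: "real \<Rightarrow> ket" where
  "ket_minus \<theta> = (\<lambda>k. if k = 0 then 1 / complex_of_real (sqrt 2)
                      else - exp (\<i> * complex_of_real \<theta>) / complex_of_real (sqrt 2))"

definition expect :: "qmat \<Rightarrow> ket \<Rightarrow> complex" where
  "expect \<rho> v = (\<Sum>i<2. \<Sum>j<2. cnj (v i) * \<rho> i j * v j)"

definition density_matrix :: "qmat \<Rightarrow> bool" where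
  "density_matrix \<rho> \<longleftrightarrow>
     (\<forall>i<2. \<forall>j<2. \<rho> i j = cnj (\<rho> j i)) \<and>
     (\<forall>v. 0 \<le> Re (expect \<rho> v)) \<and>
     \<rho> 0 0 + \<rho> 1 1 = 1"

definition tensor :: "qmat \<Rightarrow> qmat \<Rightarrow> qmat2" where
  "tensor \<rho> \<sigma> = (\<lambda>(a, b) (a', b'). \<rho> a a' * \<sigma> b b')"

definition cz_diag :: "nat \<times> nat \<Rightarrow> complex" where
  "cz_diag = (\<lambda>(a, b). (-1) ^ (a * b))"

definition apply_cz :: "qmat2 \<Rightarrow> qmat2" where
  "apply_cz \<rho> = (\<lambda>x y. cz_diag x * \<rho> x y * cnj (cz_diag y))"

text \<open>Probability of projecting the second qubit onto |m>:
  Tr[(I \<otimes> |m><m|) rho].\<close>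
definition prob_second :: "qmat2 \<Rightarrow> ket \<Rightarrow> complex" where
  "prob_second \<rho> m = (\<Sum>a<2. \<Sum>b<2. \<Sum>b'<2. cnj (m b) * \<rho> (a, b) (a, b') * m b')"

definition meas_ket :: "real \<Rightarrow> nat \<Rightarrow> ket" where
  "meas_ket \<delta> k = (if k = 0 then ket_plus \<delta> else ket_minus \<delta>)"

end

theory Submission
  imports Defs
begin

definition zflip :: "ket \<Rightarrow> ket" where
  "zflip m = (\<lambda>k. if k = 0 then m 0 else - m k)"

lemma L2: "prob_second (apply_cz (tensor A B)) m
   = A 0 0 * expect B m + A 1 1 * expect B (zflip m)"
  unfolding prob_second_def apply_cz_def tensor_def expect_def zflip_def cz_diag_def
  by (simp add: numeral_2_eq_2 algebra_simps)

lemma L3a: "zflip (ket_plus t) = ket_minus t"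
  unfolding zflip_def ket_plus_def ket_minus_def by auto
lemma L3b: "zflip (ket_minus t) = ket_plus t"
  unfolding zflip_def ket_plus_def ket_minus_def by auto

lemma expi_pi: "exp (\<i> * complex_of_real (t + pi)) = - exp (\<i> * complex_of_real t)"
  by (simp add: distrib_left exp_add)

lemma L4a: "ket_plus (t + pi) = ket_minus t"
  unfolding ket_plus_def ket_minus_def using expi_pi by auto
lemma L4b: "ket_minus (t + pi) = ket_plus t"
  unfolding ket_plus_def ket_minus_def using expi_pi by auto

lemma ee0: "cnj (exp (\<i> * complex_of_real t)) * exp (\<i> * complex_of_real t) = 1"
proof -
  have "cnj (cis t) * cis t = 1" by (simp add: cis_cnj cis_mult)
  then show ?thesis by (simp only: cis_conv_exp)
qed
lemma cc0: "complex_of_real (1 / sqrt 2) * complex_of_real (1 / sqrt 2) = 1/2"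
proof -
  have "(1 / sqrt 2) * (1 / sqrt 2) = (1/2::real)" by simp
  then show ?thesis by (metis of_real_mult of_real_divide of_real_1 of_real_numeral)
qed
lemma L1: "expect B (ket_plus t) + expect B (ket_minus t) = B 0 0 + B 1 1"
proof -
  define e where "e = exp (\<i> * complex_of_real t)"
  define c where "c = complex_of_real (1 / sqrt 2)"
  have ee: "cnj e * e = 1"
    unfolding e_def by (rule ee0)
  have cc: "c * c = 1 / 2"
    unfolding c_def by (rule cc0)
  have cr: "cnj c = c" unfolding c_def by simp
  have kp: "ket_plus t = (\<lambda>k. if k = 0 then c else e * c)"
    unfolding ket_plus_def c_def e_def by (auto simp: divide_complex_def)
  have km: "ket_minus t = (\<lambda>k. if k = 0 then c else - (e * c))"
    unfolding ket_minus_def c_def e_def by (auto simp: divide_complex_def)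
  have "expect B (ket_plus t) + expect B (ket_minus t)
      = 2 * (c * c) * (B 0 0 + (cnj e * e) * B 1 1)"
    unfolding expect_def kp km by (simp add: numeral_2_eq_2 cr algebra_simps)
  then show ?thesis using ee cc by simp
qed

lemma Lb: "d < 2 \<Longrightarrow> expect B (basis_ket d) = B d d"
proof -
  assume "d < 2" then have "d = 0 \<or> d = 1" by auto
  then show ?thesis unfolding expect_def basis_ket_def
    by (auto simp add: numeral_2_eq_2 lessThan_Suc)
qed

lemma tr: "density_matrix \<rho> \<Longrightarrow> \<rho> 0 0 + \<rho> 1 1 = 1"
  unfolding density_matrix_def by (erule conjE)+

theorem lemma2:
  fixes \<theta> :: real and d r :: nat and \<rho>_dummy \<rho>_trap :: qmat
  assumes "\<theta> \<in> {real i * pi / 4 | i. i \<le> 7}"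
    and "d \<in> {0, 1}" and "r \<in> {0, 1}"
    and "density_matrix \<rho>_dummy" and "density_matrix \<rho>_trap"
  shows "let \<delta> = \<theta> + real r * pi;
             F_dummy = expect \<rho>_dummy (basis_ket d);
             F_trap = expect \<rho>_trap (ket_plus \<theta>);
             fail_outcome = 1 - (d + r) mod 2;
             p_fail = prob_second (apply_cz (tensor \<rho>_dummy \<rho>_trap)) (meas_ket \<delta> fail_outcome)
         in p_fail = F_dummy * (1 - F_trap) + F_trap * (1 - F_dummy)"
proof -
  have trD: "\<rho>_dummy 0 0 + \<rho>_dummy 1 1 = 1" and trT: "\<rho>_trap 0 0 + \<rho>_trap 1 1 = 1"
    using tr assms(4,5) by blast+
  have m: "expect \<rho>_trap (ket_minus \<theta>) = 1 - expect \<rho>_trap (ket_plus \<theta>)"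
    using L1[of \<rho>_trap \<theta>] trT by (simp add: algebra_simps)
  have d1: "\<rho>_dummy 1 1 = 1 - \<rho>_dummy 0 0" using trD by (simp add: algebra_simps)
  define Ep where "Ep = expect \<rho>_trap (ket_plus \<theta>)"
  define D0 where "D0 = \<rho>_dummy 0 0"
  have m': "expect \<rho>_trap (ket_minus \<theta>) = 1 - Ep" using m Ep_def by simp
  have d1': "\<rho>_dummy 1 1 = 1 - D0" using d1 D0_def by simp
  have P: "prob_second (apply_cz (tensor \<rho>_dummy \<rho>_trap)) mm
     = D0 * expect \<rho>_trap mm + (1 - D0) * expect \<rho>_trap (zflip mm)" for mm
    by (simp only: L2 d1' D0_def)
  have pi0: "\<theta> + real 0 * pi = \<theta>" by simp
  have pi1: "\<theta> + real 1 * pi = \<theta> + pi" by simp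
  have r01: "r = 0 \<or> r = 1" and d01: "d = 0 \<or> d = 1" using assms(2,3) by auto
  from d01 r01 show ?thesis
  proof (elim disjE)
    assume hd: "d = 0" and hr: "r = 0"
    have mk: "meas_ket (\<theta> + real r * pi) (1 - (d + r) mod 2) = ket_minus \<theta>"
      using hd hr by (simp add: meas_ket_def L4a L4b)
    have F: "expect \<rho>_dummy (basis_ket d) = D0"
      using hd Lb[of d \<rho>_dummy] d1' D0_def by simp
    have "prob_second (apply_cz (tensor \<rho>_dummy \<rho>_trap)) (meas_ket (\<theta> + real r * pi) (1 - (d + r) mod 2))
       = D0 * (1 - Ep) + Ep * (1 - (D0))"
      unfolding mk P L3a L3b m' Ep_def[symmetric] by (simp add: algebra_simps)
    then show ?thesis unfolding Let_def F Ep_def by simp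
  next
    assume hd: "d = 0" and hr: "r = 1"
    have mk: "meas_ket (\<theta> + real r * pi) (1 - (d + r) mod 2) = ket_minus \<theta>"
      using hd hr by (simp add: meas_ket_def L4a L4b)
    have F: "expect \<rho>_dummy (basis_ket d) = D0"
      using hd Lb[of d \<rho>_dummy] d1' D0_def by simp
    have "prob_second (apply_cz (tensor \<rho>_dummy \<rho>_trap)) (meas_ket (\<theta> + real r * pi) (1 - (d + r) mod 2))
       = D0 * (1 - Ep) + Ep * (1 - (D0))"
      unfolding mk P L3a L3b m' Ep_def[symmetric] by (simp add: algebra_simps)
    then show ?thesis unfolding Let_def F Ep_def by simp
  next
    assume hd: "d = 1" and hr: "r = 0"
    have mk: "meas_ket (\<theta> + real r * pi) (1 - (d + r) mod 2) = ket_plus \<theta>"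
      using hd hr by (simp add: meas_ket_def L4a L4b)
    have F: "expect \<rho>_dummy (basis_ket d) = 1 - D0"
      using hd Lb[of d \<rho>_dummy] d1' D0_def by simp
    have "prob_second (apply_cz (tensor \<rho>_dummy \<rho>_trap)) (meas_ket (\<theta> + real r * pi) (1 - (d + r) mod 2))
       = (1 - D0) * (1 - Ep) + Ep * (1 - (1 - D0))"
      unfolding mk P L3a L3b m' Ep_def[symmetric] by (simp add: algebra_simps)
    then show ?thesis unfolding Let_def F Ep_def by simp
  next
    assume hd: "d = 1" and hr: "r = 1"
    have mk: "meas_ket (\<theta> + real r * pi) (1 - (d + r) mod 2) = ket_plus \<theta>"
      using hd hr by (simp add: meas_ket_def L4a L4b)
    have F: "expect \<rho>_dummy (basis_ket d) = 1 - D0"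
      using hd Lb[of d \<rho>_dummy] d1' D0_def by simp
    have "prob_second (apply_cz (tensor \<rho>_dummy \<rho>_trap)) (meas_ket (\<theta> + real r * pi) (1 - (d + r) mod 2))
       = (1 - D0) * (1 - Ep) + Ep * (1 - (1 - D0))"
      unfolding mk P L3a L3b m' Ep_def[symmetric] by (simp add: algebra_simps)
    then show ?thesis unfolding Let_def F Ep_def by simp
  qed
qed

end
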